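(* Let $V$ be a finite set and for each $v\in V$ let $P_v(x)$ be a Bernstein polynomial in $n$ variables. Fix a domain $S\subseteq[0,1]^n$. If $\sum_{v\in V}P_v(x)>0$ for all $x\in S$, then there exists a Bernoulli factory with output set $V$ which terminates almost surely on $S$ and, for every $x\in S$, outputs $v$ with probability $P_v(x)/\sum_{v'\in V}P_{v'}(x)$.
   Context: A Bernstein monomial is $\prod_{i=1}^n x_i^{a_i}(1-x_i)^{b_i}$ with nonnegative integers $a_i,b_i$; a Bernstein polynomial is a finite combination $\sum_j c_jM_j(x)$ of Bernstein monomials with positive coefficients $c_j$. A Bernoulli factory with output set $V$ (for inputs $x\in[0,1]^n$) is a (possibly infinite) rooted binary tree whose internal nodes are labeled by an index $i\in[n]$ or a known constant $c\in(0,1)$ and whose leaves are labeled by elements of $V$; on input $x$ one walks from the root, at a node labeled $i$ flipping a fresh independent coin that is $1$ with probability $x_i$, at a node labeled $c$ a fresh coin of bias $c$, following the edge labeled by the outcome, and outputs the label of the leaf reached; $\mathcal{F}(x)$ is the output ($\emptyset$ if no leaf is reached). It terminates almost surely on $S$ if $\Pr[\mathcal{F}(x)=\emptyset]=0$ for all $x\in S$. *)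

theory Defs
  imports "HOL-Analysis.Analysis"
begin

definition bernstein_monomial :: "nat \<Rightarrow> (nat \<Rightarrow> nat) \<Rightarrow> (nat \<Rightarrow> nat) \<Rightarrow> (nat \<Rightarrow> real) \<Rightarrow> real" where
  "bernstein_monomial n a b x = (\<Prod>i<n. x i ^ a i * (1 - x i) ^ b i)"

definition is_bernstein_poly :: "nat \<Rightarrow> ((nat \<Rightarrow> real) \<Rightarrow> real) \<Rightarrow> bool" where
  "is_bernstein_poly n P \<longleftrightarrow>
     (\<exists>cs :: (real \<times> (nat \<Rightarrow> nat) \<times> (nat \<Rightarrow> nat)) list.
        (\<forall>(c, a, b) \<in> set cs. c > 0) \<and>
        (\<forall>x. P x = (\<Sum>(c, a, b) \<leftarrow> cs. c * bernstein_monomial n a b x)))"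

datatype 'v node = Coin nat | Const real | Leaf 'v

fun is_leaf :: "'v node \<Rightarrow> bool" where
  "is_leaf (Leaf _) = True"
| "is_leaf _ = False"

text \<open>A (possibly infinite) rooted binary tree is given by its labelling of positions
  (finite bit strings, the root being []); position p @ [b] is the child of p along the
  edge labelled by the coin outcome b (True = 1). Only positions reached from the root
  through internal nodes matter.\<close>
type_synonym 'v factory = "bool list \<Rightarrow> 'v node"

definition well_formed_factory :: "nat \<Rightarrow> 'v set \<Rightarrow> 'v factory \<Rightarrow> bool" where
  "well_formed_factory n V T \<longleftrightarrow>
     (\<forall>p. case T p of Coin i \<Rightarrow> i < n | Const c \<Rightarrow> 0 < c \<and> c < 1 | Leaf v \<Rightarrow> v \<in> V)"

definition reachable :: "'v factory \<Rightarrow> bool list \<Rightarrow> bool" where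
  "reachable T p \<longleftrightarrow> (\<forall>k < length p. \<not> is_leaf (T (take k p)))"

fun edge_prob :: "(nat \<Rightarrow> real) \<Rightarrow> 'v node \<Rightarrow> bool \<Rightarrow> real" where
  "edge_prob x (Coin i) b = (if b then x i else 1 - x i)"
| "edge_prob x (Const c) b = (if b then c else 1 - c)"
| "edge_prob x (Leaf _) b = 0"

definition path_prob :: "(nat \<Rightarrow> real) \<Rightarrow> 'v factory \<Rightarrow> bool list \<Rightarrow> real" where
  "path_prob x T p = (\<Prod>k < length p. edge_prob x (T (take k p)) (p ! k))"

definition leaves_with :: "'v factory \<Rightarrow> 'v \<Rightarrow> bool list set" where
  "leaves_with T v = {p. reachable T p \<and> T p = Leaf v}"

definition reached_leaves :: "'v factory \<Rightarrow> bool list set" where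
  "reached_leaves T = {p. reachable T p \<and> is_leaf (T p)}"

definition outputs_with_prob :: "'v factory \<Rightarrow> (nat \<Rightarrow> real) \<Rightarrow> 'v \<Rightarrow> real \<Rightarrow> bool" where
  "outputs_with_prob T x v r \<longleftrightarrow> (path_prob x T has_sum r) (leaves_with T v)"

text \<open>Almost-sure termination on S: Pr[F(x) = empty] = 0, i.e. the probability of
  reaching some leaf is 1.\<close>
definition terminates_as_on :: "'v factory \<Rightarrow> (nat \<Rightarrow> real) set \<Rightarrow> bool" where
  "terminates_as_on T S \<longleftrightarrow> (\<forall>x\<in>S. (path_prob x T has_sum 1) (reached_leaves T))"

end

theory Submission
  imports Defs
begin


lemma has_sum_Union_nonneg:
  fixes f :: "'a \<Rightarrow> real"
  assumes f: "\<And>x. x \<in> A \<Longrightarrow> (f has_sum g x) (B x)"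
    and g: "(g has_sum S) A"
    and nn: "\<And>x y. x \<in> A \<Longrightarrow> y \<in> B x \<Longrightarrow> f y \<ge> 0"
    and disj: "disjoint_family_on B A"
  shows "(f has_sum S) (\<Union>x\<in>A. B x)"
proof -
  have s: "(f \<circ> snd) summable_on Sigma A B"
    using f g nn by (intro summable_on_SigmaI[where g = g]) (auto dest: has_sum_imp_summable)
  have "((f \<circ> snd) has_sum S) (Sigma A B)"
    by (rule has_sum_SigmaI[OF _ g s]) (use f in auto)
  also have "?this \<longleftrightarrow> (f has_sum S) (snd ` Sigma A B)" using disj
    by (subst has_sum_reindex; force simp: disjoint_family_on_def inj_on_def)
  also have "snd ` (Sigma A B) = (\<Union>x\<in>A. B x)"
    by force
  finally show ?thesis .
qed

lemma finite_BL: "finite {q :: bool list. length q = D}"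
  using finite_lists_length_eq[of "UNIV :: bool set" D] by simp

lemma prod_lessThan_add:
  fixes f :: "nat \<Rightarrow> 'a::comm_monoid_mult"
  shows "prod f {..<m+n} = prod f {..<m} * prod (\<lambda>k. f (m+k)) {..<n}"
  by (induction n) (simp_all add: mult.assoc)

definition blk :: "nat \<Rightarrow> 'a list \<Rightarrow> nat \<Rightarrow> 'a list" where
  "blk D p j = take D (drop (j * D) p)"

definition ptree :: "nat \<Rightarrow> (nat \<Rightarrow> 'v node) \<Rightarrow> (bool list \<Rightarrow> 'v option) \<Rightarrow> 'v factory" where
  "ptree D lev out p = (if \<forall>j < length p div D. out (blk D p j) = None then lev (length p mod D)
     else if length p mod D = 0 \<and> (\<forall>j < length p div D - 1. out (blk D p j) = None)
       then Leaf (the (out (blk D p (length p div D - 1))))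
     else Const (1/2))"

definition pp :: "nat \<Rightarrow> (nat \<Rightarrow> bool \<Rightarrow> real) \<Rightarrow> bool list \<Rightarrow> real" where
  "pp D w p = (\<Prod>k<length p. w (k mod D) (p ! k))"

definition good :: "nat \<Rightarrow> (bool list \<Rightarrow> 'v option) \<Rightarrow> (bool list \<Rightarrow> bool) \<Rightarrow> nat \<Rightarrow> bool list set" where
  "good D out G m = {p. length p = Suc m * D \<and> (\<forall>j<m. out (blk D p j) = None) \<and> G (blk D p m)}"

lemma blk_app0: "length q = D \<Longrightarrow> blk D (q @ p) 0 = q"
  by (simp add: blk_def)

lemma blk_appS: "length q = D \<Longrightarrow> blk D (q @ p) (Suc j) = blk D p j"
  by (simp add: blk_def add.commute)

lemma blk_drop: "blk D p (Suc j) = blk D (drop D p) j"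
  by (simp add: blk_def add.commute)

lemma pp_append:
  assumes "length q = D"
  shows "pp D w (q @ p) = pp D w q * pp D w p"
proof -
  have "pp D w (q @ p) = (\<Prod>k<D + length p. w (k mod D) ((q@p) ! k))"
    using assms by (simp add: pp_def)
  also have "\<dots> = (\<Prod>k<D. w (k mod D) ((q@p) ! k)) * (\<Prod>k<length p. w ((D + k) mod D) ((q@p) ! (D + k)))"
    by (simp add: prod_lessThan_add)
  also have "(\<Prod>k<D. w (k mod D) ((q@p) ! k)) = pp D w q"
    using assms by (simp add: pp_def nth_append)
  also have "(\<Prod>k<length p. w ((D + k) mod D) ((q@p) ! (D + k))) = pp D w p"
    using assms by (simp add: pp_def nth_append)
  finally show ?thesis .
qed

lemma good_0: "good D out G 0 = {p. length p = D \<and> G p}"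
  by (auto simp: good_def blk_def)

lemma good_Suc:
  "good D out G (Suc m) = (\<lambda>(q,p). q @ p) ` ({q. length q = D \<and> out q = None} \<times> good D out G m)"
proof (intro equalityI subsetI)
  fix p' assume p': "p' \<in> good D out G (Suc m)"
  let ?q = "take D p'" and ?p = "drop D p'"
  have len: "length p' = D + Suc m * D" using p' by (simp add: good_def)
  have "blk D p' 0 = ?q" by (simp add: blk_def)
  moreover have "\<And>j. blk D p' (Suc j) = blk D ?p j" by (rule blk_drop)
  ultimately have "?q \<in> {q. length q = D \<and> out q = None}" "?p \<in> good D out G m"
    using p' len by (auto simp: good_def)
  then show "p' \<in> (\<lambda>(q,p). q @ p) ` ({q. length q = D \<and> out q = None} \<times> good D out G m)"
    by (intro image_eqI[of _ _ "(?q, ?p)"]) auto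
next
  fix p' assume "p' \<in> (\<lambda>(q,p). q @ p) ` ({q. length q = D \<and> out q = None} \<times> good D out G m)"
  then obtain q p where qp: "p' = q @ p" "length q = D" "out q = None" "p \<in> good D out G m"
    by auto
  show "p' \<in> good D out G (Suc m)"
    unfolding good_def
  proof (intro CollectI conjI allI impI)
    show "length p' = Suc (Suc m) * D" using qp by (simp add: good_def)
    show "G (blk D p' (Suc m))" using qp by (simp add: blk_appS good_def)
    fix j assume "j < Suc m"
    then show "out (blk D p' j) = None" using qp
      by (cases j) (auto simp: blk_appS blk_app0 good_def)
  qed
qed

lemma finite_good: "finite (good D out G m)"
  by (rule finite_subset[OF _ finite_BL[of "Suc m * D"]]) (auto simp: good_def)

lemma sum_good:
  assumes "D > 0"
  shows "(\<Sum>p\<in>good D out G m. pp D w p) =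
    (\<Sum>q\<in>{q. length q = D \<and> out q = None}. pp D w q) ^ m * (\<Sum>q\<in>{q. length q = D \<and> G q}. pp D w q)"
proof (induction m)
  case 0
  then show ?case by (simp add: good_0)
next
  case (Suc m)
  let ?N = "{q. length q = D \<and> out q = None}"
  have inj: "inj_on (\<lambda>(q,p). q @ p) (?N \<times> good D out G m)"
    by (auto simp: inj_on_def)
  have "(\<Sum>p\<in>good D out G (Suc m). pp D w p) = (\<Sum>(q,p)\<in>?N \<times> good D out G m. pp D w (q @ p))"
    unfolding good_Suc by (subst sum.reindex[OF inj]) (simp add: case_prod_unfold)
  also have "\<dots> = (\<Sum>(q,p)\<in>?N \<times> good D out G m. pp D w q * pp D w p)"
    by (intro sum.cong refl) (auto simp: pp_append)
  also have "\<dots> = (\<Sum>q\<in>?N. pp D w q) * (\<Sum>p\<in>good D out G m. pp D w p)"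
    by (simp add: sum_product sum.cartesian_product)
  finally show ?case using Suc by simp
qed

lemma has_sum_good:
  assumes D: "D > 0" and nn: "\<And>k b. k < D \<Longrightarrow> w k b \<ge> 0"
    and rho: "(\<Sum>q\<in>{q. length q = D \<and> out q = None}. pp D w q) < 1"
  shows "(pp D w has_sum ((\<Sum>q\<in>{q. length q = D \<and> G q}. pp D w q) /
            (1 - (\<Sum>q\<in>{q. length q = D \<and> out q = None}. pp D w q)))) (\<Union>m. good D out G m)"
proof -
  let ?r = "\<Sum>q\<in>{q. length q = D \<and> out q = None}. pp D w q"
  let ?g = "\<Sum>q\<in>{q. length q = D \<and> G q}. pp D w q"
  have ppnn: "pp D w p \<ge> 0" for p unfolding pp_def
    by (rule prod_nonneg) (simp add: nn D)
  have r0: "?r \<ge> 0" by (rule sum_nonneg) (simp add: ppnn)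
  have g0: "?g \<ge> 0" by (rule sum_nonneg) (simp add: ppnn)
  have "(\<lambda>m. ?r ^ m * ?g) sums (?g / (1 - ?r))"
    using geometric_sums[of ?r] r0 rho sums_mult2[of "\<lambda>m. ?r ^ m" "1/(1-?r)" ?g]
    by simp
  then have gs: "((\<lambda>m. ?r ^ m * ?g) has_sum (?g / (1 - ?r))) UNIV"
    by (rule sums_nonneg_imp_has_sum) (simp add: r0 g0)
  show ?thesis
  proof (rule has_sum_Union_nonneg[OF _ gs])
    fix m :: nat assume "m \<in> UNIV"
    show "(pp D w has_sum ?r ^ m * ?g) (good D out G m)"
      by (rule has_sum_finiteI[OF finite_good]) (simp add: sum_good[OF D])
  next
    show "disjoint_family_on (good D out G) UNIV"
      using D by (auto simp: disjoint_family_on_def good_def)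
  qed (simp add: ppnn)
qed

lemma blk_take:
  assumes "Suc j * D \<le> k"
  shows "blk D (take k p) j = blk D p j"
proof -
  have "D \<le> k - j * D" using assms by simp
  then show ?thesis
    by (simp add: blk_def drop_take min_def)
qed

lemma ptree_prefix:
  assumes D: "D > 0" and p: "p \<in> good D out G m" and k: "k < length p"
  shows "ptree D lev out (take k p) = lev (k mod D)"
proof -
  have lt: "k div D < Suc m"
    using p k D by (simp add: good_def div_less_iff_less_mult)
  have "out (blk D (take k p) j) = None" if "j < k div D" for j
  proof -
    have "Suc j * D \<le> (k div D) * D"
      using that by (intro mult_right_mono) simp_all
    also have "\<dots> \<le> k" using div_mult_mod_eq[of k D] by linarith
    finally have "Suc j * D \<le> k" .
    then have "blk D (take k p) j = blk D p j" by (rule blk_take)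
    moreover have "j < m" using that lt by simp
    ultimately show ?thesis using p by (simp add: good_def)
  qed
  then show ?thesis using k by (simp add: ptree_def)
qed

lemma ptree_leaf:
  assumes D: "D > 0" and p: "p \<in> good D out G m" and G: "\<And>q. G q \<Longrightarrow> out q \<noteq> None"
  shows "ptree D lev out p = Leaf (the (out (blk D p m)))"
proof -
  have len: "length p = Suc m * D" and N: "\<forall>j<m. out (blk D p j) = None" and g: "G (blk D p m)"
    using p by (auto simp: good_def)
  have dv: "length p div D = Suc m" "length p mod D = 0" using len D by simp_all
  show ?thesis using N G[OF g] unfolding ptree_def dv by auto
qed

lemma reachable_good:
  assumes D: "D > 0" and lev: "\<And>k. k < D \<Longrightarrow> \<not> is_leaf (lev k)" and p: "p \<in> good D out G m"
  shows "reachable (ptree D lev out) p"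
  unfolding reachable_def using ptree_prefix[OF D p] lev D by simp

lemma path_prob_good:
  assumes D: "D > 0" and p: "p \<in> good D out G m"
  shows "path_prob x (ptree D lev out) p = pp D (\<lambda>k b. edge_prob x (lev k) b) p"
  unfolding path_prob_def pp_def
  by (intro prod.cong refl) (simp add: ptree_prefix[OF D p])

lemma ptree_is_leaf:
  assumes D: "D > 0" and lev: "\<And>k. k < D \<Longrightarrow> \<not> is_leaf (lev k)"
    and "is_leaf (ptree D lev out p)"
  shows "\<exists>m v. p \<in> good D out (\<lambda>q. out q = Some v) m \<and> ptree D lev out p = Leaf v"
proof -
  let ?M = "length p div D"
  have c1: "\<not> (\<forall>j < ?M. out (blk D p j) = None)"
  proof
    assume "\<forall>j < ?M. out (blk D p j) = None"
    then have "ptree D lev out p = lev (length p mod D)" by (simp add: ptree_def)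
    moreover have "length p mod D < D" using D by simp
    ultimately have "\<not> is_leaf (ptree D lev out p)" using lev by simp
    then show False using assms(3) by simp
  qed
  have c2: "length p mod D = 0 \<and> (\<forall>j < ?M - 1. out (blk D p j) = None)"
  proof (rule ccontr)
    assume nc: "\<not> ?thesis"
    have "ptree D lev out p = Const (1/2)" unfolding ptree_def
      by (simp only: if_not_P[OF c1] if_not_P[OF nc])
    with assms(3) show False by simp
  qed
  from c1 have "?M > 0" by auto
  then obtain m where m: "?M = Suc m" by (cases ?M) auto
  have "out (blk D p m) \<noteq> None"
  proof
    assume "out (blk D p m) = None"
    with c2 m have "\<forall>j < ?M. out (blk D p j) = None" by (auto simp: less_Suc_eq)
    with c1 show False by blast
  qed
  then obtain v where v: "out (blk D p m) = Some v" by auto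
  have len: "length p = Suc m * D" using m c2 div_mult_mod_eq[of "length p" D]
    by simp
  have "p \<in> good D out (\<lambda>q. out q = Some v) m"
    using len c2 m v by (simp add: good_def)
  moreover have "ptree D lev out p = Leaf v"
    unfolding ptree_def if_not_P[OF c1] using c2 m v by simp
  ultimately show ?thesis by blast
qed

lemma leaves_with_ptree:
  assumes D: "D > 0" and lev: "\<And>k. k < D \<Longrightarrow> \<not> is_leaf (lev k)"
  shows "leaves_with (ptree D lev out) v = (\<Union>m. good D out (\<lambda>q. out q = Some v) m)"
proof (intro equalityI subsetI)
  fix p assume "p \<in> leaves_with (ptree D lev out) v"
  then have "is_leaf (ptree D lev out p)" "ptree D lev out p = Leaf v"
    by (auto simp: leaves_with_def)
  then show "p \<in> (\<Union>m. good D out (\<lambda>q. out q = Some v) m)"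
    using ptree_is_leaf[OF D lev] by fastforce
next
  fix p assume "p \<in> (\<Union>m. good D out (\<lambda>q. out q = Some v) m)"
  then obtain m where p: "p \<in> good D out (\<lambda>q. out q = Some v) m" by auto
  have "ptree D lev out p = Leaf (the (out (blk D p m)))"
    by (rule ptree_leaf[OF D p]) auto
  also have "\<dots> = Leaf v" using p by (simp add: good_def)
  finally show "p \<in> leaves_with (ptree D lev out) v"
    using reachable_good[OF D lev p] by (simp add: leaves_with_def)
qed

lemma reached_leaves_ptree:
  assumes D: "D > 0" and lev: "\<And>k. k < D \<Longrightarrow> \<not> is_leaf (lev k)"
  shows "reached_leaves (ptree D lev out) = (\<Union>m. good D out (\<lambda>q. out q \<noteq> None) m)"
proof (intro equalityI subsetI)
  fix p assume "p \<in> reached_leaves (ptree D lev out)"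
  then have "is_leaf (ptree D lev out p)"
    by (auto simp: reached_leaves_def)
  from ptree_is_leaf[OF D lev this] obtain m v where "p \<in> good D out (\<lambda>q. out q = Some v) m"
    by blast
  then show "p \<in> (\<Union>m. good D out (\<lambda>q. out q \<noteq> None) m)"
    by (auto simp: good_def)
next
  fix p assume "p \<in> (\<Union>m. good D out (\<lambda>q. out q \<noteq> None) m)"
  then obtain m where p: "p \<in> good D out (\<lambda>q. out q \<noteq> None) m" by auto
  have "ptree D lev out p = Leaf (the (out (blk D p m)))"
    by (rule ptree_leaf[OF D p]) auto
  then show "p \<in> reached_leaves (ptree D lev out)"
    using reachable_good[OF D lev p] by (simp add: reached_leaves_def)
qed



lemma prod_group:
  fixes f :: "nat \<Rightarrow> 'a::comm_monoid_mult"
  shows "(\<Prod>k<n*m. f k) = (\<Prod>i<n. \<Prod>t<m. f (i*m+t))"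
proof (induction n)
  case 0 then show ?case by simp
next
  case (Suc n)
  have "(\<Prod>k<Suc n*m. f k) = (\<Prod>k<n*m + m. f k)" by (simp add: add.commute)
  also have "\<dots> = (\<Prod>k<n*m. f k) * (\<Prod>t<m. f (n*m+t))" by (rule prod_lessThan_add)
  finally show ?case using Suc by simp
qed

lemma sum_prod_lists:
  fixes h :: "nat \<Rightarrow> bool \<Rightarrow> 'a::comm_semiring_1"
  shows "(\<Sum>q\<in>{q::bool list. length q = D}. \<Prod>k<D. h k (q!k)) = (\<Prod>k<D. h k True + h k False)"
proof (induction D arbitrary: h)
  case 0 then show ?case by simp
next
  case (Suc D)
  have eq: "{q::bool list. length q = Suc D} = (\<lambda>(b,q). b # q) ` (UNIV \<times> {q. length q = D})"
    by (auto simp: length_Suc_conv)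
  have inj: "inj_on (\<lambda>(b,q). b # q) (UNIV \<times> {q::bool list. length q = D})"
    by (auto simp: inj_on_def)
  have "(\<Sum>q\<in>{q::bool list. length q = Suc D}. \<Prod>k<Suc D. h k (q!k))
      = (\<Sum>(b,q)\<in>UNIV \<times> {q::bool list. length q = D}. h 0 b * (\<Prod>k<D. h (Suc k) (q!k)))"
    unfolding eq by (subst sum.reindex[OF inj]) (simp add: case_prod_unfold prod.lessThan_Suc_shift del: prod.lessThan_Suc)
  also have "\<dots> = (\<Sum>b\<in>UNIV. h 0 b) * (\<Sum>q\<in>{q::bool list. length q = D}. \<Prod>k<D. h (Suc k) (q!k))"
    by (simp add: sum_product sum.cartesian_product)
  also have "\<dots> = (h 0 True + h 0 False) * (\<Prod>k<D. h (Suc k) True + h (Suc k) False)"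
    using Suc[of "\<lambda>k. h (Suc k)"] by (simp add: UNIV_bool add.commute)
  also have "\<dots> = (\<Prod>k<Suc D. h k True + h k False)"
    by (simp add: prod.lessThan_Suc_shift del: prod.lessThan_Suc)
  finally show ?case .
qed

lemma prod_ind:
  "(\<Prod>k<(D::nat). (if P k then 1 else 0 :: real)) = (if \<forall>k<D. P k then 1 else 0)"
  by (induction D) (auto simp: less_Suc_eq)

lemma prod_pow_prefix:
  assumes "a \<le> K"
  shows "(\<Prod>t<K. (if t < a then y else 1 :: real)) = y ^ a"
proof -
  have "(\<Prod>t<K. (if t < a then y else 1 :: real)) = (\<Prod>t<a + (K - a). (if t < a then y else 1 :: real))"
    using assms by simp
  also have "\<dots> = y ^ a" by (subst prod_lessThan_add) simp
  finally show ?thesis .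
qed

locale round =
  fixes n :: nat and G :: "(real \<times> (nat \<Rightarrow> nat) \<times> (nat \<Rightarrow> nat) \<times> 'v) list"
  assumes G_ne: "G \<noteq> []" and G_pos: "\<And>e. e \<in> set G \<Longrightarrow> fst e > 0"
begin

definition "J = length G"
definition "c j = fst (G ! j)"
definition "a j = fst (snd (G ! j))"
definition "b j = fst (snd (snd (G ! j)))"
definition "lab j = snd (snd (snd (G ! j)))"
definition "R l = (\<Sum>m\<in>{l..<J}. c m)"
definition "K = (\<Sum>j<J. \<Sum>i<n. a j i + b j i)"
definition "D = J + n * (2 * K)"
definition lev :: "nat \<Rightarrow> 'v node" where "lev k = (if k = 0 then Const (1/2) else if k < J then Const (c (k-1) / R (k-1))
                     else Coin ((k - J) div (2 * K)))"
definition "req j k = (if k = 0 then None else if k < J then (if k \<le> Suc j then Some (k = Suc j) else None)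
   else if (k - J) mod (2 * K) < K then (if (k - J) mod (2 * K) < a j ((k - J) div (2 * K)) then Some True else None)
   else (if (k - J) mod (2 * K) - K < b j ((k - J) div (2 * K)) then Some False else None))"
definition "cond j q = (\<forall>k<D. req j k = None \<or> req j k = Some (q ! k))"
definition "out q = (if \<exists>j<J. cond j q then Some (lab (SOME j. j < J \<and> cond j q)) else None)"
definition "w x k bb = edge_prob x (lev k) bb"

lemma J_pos: "J > 0" using G_ne by (simp add: J_def)
lemma D_pos: "D > 0" using J_pos by (simp add: D_def)

lemma c_pos: "j < J \<Longrightarrow> c j > 0"
  using G_pos[of "G ! j"] by (simp add: c_def J_def)

lemma R_Suc: "l < J \<Longrightarrow> R l = c l + R (Suc l)"
  by (simp add: R_def sum.atLeast_Suc_lessThan)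

lemma R_J: "R J = 0" by (simp add: R_def)

lemma R_pos: "l < J \<Longrightarrow> R l > 0"
proof -
  assume l: "l < J"
  have "R (Suc l) \<ge> 0" unfolding R_def
    by (rule sum_nonneg) (simp add: less_imp_le c_pos)
  then show ?thesis using R_Suc[OF l] c_pos[OF l] by simp
qed

lemma lev_ok:
  assumes "k < D"
  shows "\<not> is_leaf (lev k)" and "case lev k of Coin i \<Rightarrow> i < n | Const r \<Rightarrow> 0 < r \<and> r < 1 | Leaf v \<Rightarrow> False"
proof -
  show "\<not> is_leaf (lev k)" by (simp add: lev_def)
  show "case lev k of Coin i \<Rightarrow> i < n | Const r \<Rightarrow> 0 < r \<and> r < 1 | Leaf v \<Rightarrow> False"
  proof (cases "k = 0")
    case True then show ?thesis by (simp add: lev_def)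
  next
    case k0: False
    show ?thesis
    proof (cases "k < J")
      case True
      let ?l = "k - 1"
      have l: "?l < J" "Suc ?l < J" using True k0 by auto
      have "R ?l = c ?l + R (Suc ?l)" by (rule R_Suc[OF l(1)])
      moreover have "R (Suc ?l) > 0" by (rule R_pos[OF l(2)])
      moreover have "c ?l > 0" by (rule c_pos[OF l(1)])
      ultimately have "0 < c ?l / R ?l" "c ?l / R ?l < 1" by (simp_all add: field_simps)
      then show ?thesis using True k0 by (simp add: lev_def)
    next
      case False
      then have "k - J < n * (2 * K)" using assms by (simp add: D_def)
      then have "(k - J) div (2 * K) < n"
        by (simp add: less_mult_imp_div_less)
      then show ?thesis using False k0 by (simp add: lev_def)
    qed
  qed
qed

lemma cond_disj:
  assumes "j < J" "j' < J" "cond j q" "cond j' q"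
  shows "j = j'"
proof (rule ccontr)
  assume ne: "j \<noteq> j'"
  have key: "False" if "i < J" "i' < J" "i < i'" "cond i q" "cond i' q" for i i'
  proof -
    have "Suc i < J" "Suc i < D" using that by (auto simp: D_def)
    then have "req i (Suc i) = Some True" "req i' (Suc i) = Some False"
      using that by (auto simp: req_def)
    then show False using that \<open>Suc i < D\<close> unfolding cond_def by force
  qed
  show False using ne assms key by (cases "j < j'") (auto simp: not_less_iff_gr_or_eq)
qed

lemma some_sel:
  assumes "\<exists>j<J. cond j q"
  shows "(SOME j. j < J \<and> cond j q) < J \<and> cond (SOME j. j < J \<and> cond j q) q"
  by (rule someI_ex) (use assms in blast)

lemma out_None_iff: "out q \<noteq> None \<longleftrightarrow> (\<exists>j<J. cond j q)"
  by (simp add: out_def)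

lemma out_None: "out q = None \<longleftrightarrow> \<not> (\<exists>j<J. cond j q)"
  by (simp add: out_def)

lemma out_Some: "out q = Some v \<longleftrightarrow> (\<exists>j\<in>{j. j < J \<and> lab j = v}. cond j q)"
proof
  assume o: "out q = Some v"
  then have ex: "\<exists>j<J. cond j q" by (auto simp: out_def split: if_splits)
  with o have "lab (SOME j. j < J \<and> cond j q) = v" by (simp add: out_def)
  with some_sel[OF ex] show "\<exists>j\<in>{j. j < J \<and> lab j = v}. cond j q" by blast
next
  assume "\<exists>j\<in>{j. j < J \<and> lab j = v}. cond j q"
  then obtain j where j: "j < J" "lab j = v" "cond j q" by auto
  then have ex: "\<exists>j<J. cond j q" by blast
  have "(SOME j. j < J \<and> cond j q) = j"
    using some_sel[OF ex] cond_disj j by blast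
  then show "out q = Some v" using ex j by (simp add: out_def)
qed

lemma out_in_V: "out q = Some v \<Longrightarrow> \<exists>j<J. lab j = v"
  using out_Some by auto

lemma ind_sum:
  assumes Js: "Js \<subseteq> {..<J}"
  shows "(if \<exists>j\<in>Js. cond j q then 1 else 0 :: real) = (\<Sum>j\<in>Js. if cond j q then 1 else 0)"
proof (cases "\<exists>j\<in>Js. cond j q")
  case True
  then obtain j0 where j0: "j0 \<in> Js" "cond j0 q" by blast
  have fin: "finite Js" using Js finite_subset by blast
  have "\<And>j. j \<in> Js \<Longrightarrow> (if cond j q then 1 else 0 :: real) = (if j = j0 then 1 else 0)"
    using cond_disj j0 Js by auto
  then have "(\<Sum>j\<in>Js. if cond j q then 1 else 0 :: real) = (\<Sum>j\<in>Js. if j = j0 then 1 else 0)"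
    by (rule sum.cong[OF refl])
  also have "\<dots> = 1" using fin j0 by simp
  finally show ?thesis using True by simp
next
  case False
  then show ?thesis by simp
qed

lemma w_sum: "(k::nat) < D \<Longrightarrow> w (x::nat\<Rightarrow>real) k True + w x k False = 1"
  using lev_ok(1)[of k] by (cases "lev k") (auto simp: w_def)

definition "gg x j k = (case req j k of None \<Rightarrow> 1 | Some bb \<Rightarrow> w x k bb)"

lemma pp_D: "length q = D \<Longrightarrow> pp D (w x) q = (\<Prod>k<D. w x k (q ! k))"
  by (simp add: pp_def)

lemma prob_cond_prod:
  "(\<Sum>q\<in>{q. length q = D}. if cond j q then pp D (w x) q else 0) = (\<Prod>k<D. gg x j k)"
proof -
  define h where "h k bb = w x k bb * (if req j k = None \<or> req j k = Some bb then 1 else 0)" for k bb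
  have 1: "(if cond j q then pp D (w x) q else 0) = (\<Prod>k<D. h k (q ! k))" if "length q = D" for q
  proof -
    have "(\<Prod>k<D. h k (q ! k)) = (\<Prod>k<D. w x k (q ! k)) *
        (\<Prod>k<D. (if req j k = None \<or> req j k = Some (q ! k) then 1 else 0))"
      unfolding h_def by (rule prod.distrib)
    also have "\<dots> = pp D (w x) q * (if cond j q then 1 else 0)"
      unfolding prod_ind pp_D[OF that] cond_def by (rule refl)
    finally show ?thesis by simp
  qed
  have 2: "h k True + h k False = gg x j k" if "k < D" for k
    using w_sum[OF that, of x] by (cases "req j k") (auto simp: h_def gg_def)
  have "(\<Sum>q\<in>{q. length q = D}. if cond j q then pp D (w x) q else 0)
      = (\<Sum>q\<in>{q. length q = D}. \<Prod>k<D. h k (q ! k))"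
    by (rule sum.cong) (simp_all add: 1)
  also have "\<dots> = (\<Prod>k<D. h k True + h k False)" by (rule sum_prod_lists)
  also have "\<dots> = (\<Prod>k<D. gg x j k)" by (rule prod.cong) (simp_all add: 2)
  finally show ?thesis .
qed

lemma total: "(\<Sum>q\<in>{q. length q = D}. pp D (w x) q) = 1"
proof -
  have "(\<Sum>q\<in>{q. length q = D}. pp D (w x) q) = (\<Sum>q\<in>{q. length q = D}. \<Prod>k<D. w x k (q ! k))"
    by (rule sum.cong) (simp_all add: pp_D)
  also have "\<dots> = (\<Prod>k<D. w x k True + w x k False)" by (rule sum_prod_lists)
  also have "\<dots> = 1" by (simp add: w_sum)
  finally show ?thesis .
qed

lemma tele: "j \<le> J \<Longrightarrow> (\<Prod>l<j. 1 - c l / R l) = R j / R 0"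
proof (induction j)
  case 0 then show ?case using R_pos[OF J_pos] by simp
next
  case (Suc j)
  then have j: "j < J" by simp
  have "(\<Prod>l<Suc j. 1 - c l / R l) = R j / R 0 * (1 - c j / R j)" using Suc by simp
  also have "\<dots> = (R j - c j) / R 0" using R_pos[OF j] R_pos[OF J_pos] by (simp add: field_simps)
  also have "\<dots> = R (Suc j) / R 0" using R_Suc[OF j] by simp
  finally show ?case .
qed

lemma w_sel:
  assumes "0 < k" "k < J"
  shows "w x k True = c (k-1) / R (k-1)" "w x k False = 1 - c (k-1) / R (k-1)"
  using assms by (simp_all add: w_def lev_def)

lemma gg_sel:
  assumes j: "j < J"
  shows "(\<Prod>k<J. gg x j k) = c j / R 0"
proof -
  have "(\<Prod>k<J. gg x j k) = (\<Prod>k<Suc j + (J - Suc j). gg x j k)" using j by simp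
  also have "\<dots> = (\<Prod>k<Suc j. gg x j k) * (\<Prod>t<J - Suc j. gg x j (Suc j + t))"
    by (rule prod_lessThan_add)
  also have "(\<Prod>k<Suc j. gg x j k) = gg x j 0 * (\<Prod>l<j. gg x j (Suc l))"
    by (simp add: prod.lessThan_Suc_shift del: prod.lessThan_Suc)
  also have "gg x j 0 = 1" by (simp add: gg_def req_def)
  also have "(\<Prod>l<j. gg x j (Suc l)) = (\<Prod>l<j. 1 - c l / R l)"
  proof (rule prod.cong[OF refl])
    fix l assume "l \<in> {..<j}"
    then have l: "l < j" by simp
    then have "req j (Suc l) = Some False" using j by (simp add: req_def)
    then show "gg x j (Suc l) = 1 - c l / R l"
      using w_sel[of "Suc l" x] l j by (simp add: gg_def)
  qed
  also have "\<dots> = R j / R 0" using j by (intro tele) simp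
  finally have 1: "(\<Prod>k<J. gg x j k) = R j / R 0 * (\<Prod>t<J - Suc j. gg x j (Suc j + t))" by simp
  show ?thesis
  proof (cases "J - Suc j")
    case 0
    then have "Suc j = J" using j by simp
    then have "R j = c j" using R_Suc[OF j] R_J by simp
    then show ?thesis using 1 0 by simp
  next
    case (Suc m)
    have "(\<Prod>t<J - Suc j. gg x j (Suc j + t)) = gg x j (Suc j) * (\<Prod>t<m. gg x j (Suc j + Suc t))"
      unfolding Suc by (simp add: prod.lessThan_Suc_shift del: prod.lessThan_Suc)
    also have "gg x j (Suc j) = c j / R j"
    proof -
      have "Suc j < J" using Suc by simp
      then show ?thesis using w_sel[of "Suc j" x] by (simp add: gg_def req_def)
    qed
    also have "(\<Prod>t<m. gg x j (Suc j + Suc t)) = 1"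
    proof (rule prod.neutral, rule ballI)
      fix t assume "t \<in> {..<m}"
      then have "Suc j + Suc t < J" using Suc by simp
      then show "gg x j (Suc j + Suc t) = 1" by (simp add: gg_def req_def)
    qed
    finally show ?thesis using 1 R_pos[OF j] by simp
  qed
qed

lemma ab_le_K:
  assumes "j < J" "i < n"
  shows "a j i \<le> K" "b j i \<le> K"
proof -
  have "a j i + b j i \<le> (\<Sum>i<n. a j i + b j i)"
    using assms by (intro member_le_sum) simp_all
  also have "\<dots> \<le> K" unfolding K_def
    using assms by (intro member_le_sum[where f = "\<lambda>j. \<Sum>i<n. a j i + b j i"]) simp_all
  finally show "a j i \<le> K" "b j i \<le> K" by simp_all
qed

lemma gg_coin_pt:
  assumes "t < 2 * K"
  shows "gg x j (J + (i * (2 * K) + t)) =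
    (if t < K then (if t < a j i then x i else 1) else (if t - K < b j i then 1 - x i else 1))"
proof -
  let ?k = "J + (i * (2 * K) + t)"
  have K: "2 * K > 0" using assms by simp
  have dm: "(?k - J) div (2 * K) = i" "(?k - J) mod (2 * K) = t"
    using assms K by simp_all
  have k: "?k \<noteq> 0" "\<not> ?k < J" using J_pos by simp_all
  have lv: "lev ?k = Coin i" unfolding lev_def by (simp only: if_not_P[OF k(1)] if_not_P[OF k(2)] dm(1))
  have r: "req j ?k = (if t < K then (if t < a j i then Some True else None)
      else (if t - K < b j i then Some False else None))"
    unfolding req_def by (simp only: if_not_P[OF k(1)] if_not_P[OF k(2)] dm)
  show ?thesis by (simp add: gg_def r w_def lv)
qed

lemma gg_coin:
  assumes "j < J" "i < n"
  shows "(\<Prod>t<2 * K. gg x j (J + (i * (2 * K) + t))) = x i ^ a j i * (1 - x i) ^ b j i"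
proof -
  have "(\<Prod>t<2 * K. gg x j (J + (i * (2 * K) + t))) = (\<Prod>t<K + K. gg x j (J + (i * (2 * K) + t)))"
    by (simp add: mult_2)
  also have "\<dots> = (\<Prod>t<K. gg x j (J + (i * (2 * K) + t))) * (\<Prod>t<K. gg x j (J + (i * (2 * K) + (K + t))))"
    by (rule prod_lessThan_add)
  also have "(\<Prod>t<K. gg x j (J + (i * (2 * K) + t))) = (\<Prod>t<K. if t < a j i then x i else 1)"
    by (rule prod.cong[OF refl]) (simp add: gg_coin_pt)
  also have "\<dots> = x i ^ a j i" using ab_le_K[OF assms] by (intro prod_pow_prefix) simp
  also have "(\<Prod>t<K. gg x j (J + (i * (2 * K) + (K + t)))) = (\<Prod>t<K. if t < b j i then 1 - x i else 1)"
    by (rule prod.cong[OF refl]) (simp add: gg_coin_pt)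
  also have "\<dots> = (1 - x i) ^ b j i" using ab_le_K[OF assms] by (intro prod_pow_prefix) simp
  finally show ?thesis .
qed

lemma prob_cond:
  assumes j: "j < J"
  shows "(\<Sum>q\<in>{q. length q = D}. if cond j q then pp D (w x) q else 0) =
    c j * bernstein_monomial n (a j) (b j) x / R 0"
proof -
  have "(\<Prod>k<D. gg x j k) = (\<Prod>k<J. gg x j k) * (\<Prod>k<n * (2 * K). gg x j (J + k))"
    unfolding D_def by (rule prod_lessThan_add)
  also have "(\<Prod>k<n * (2 * K). gg x j (J + k)) = (\<Prod>i<n. \<Prod>t<2 * K. gg x j (J + (i * (2 * K) + t)))"
    by (rule prod_group)
  also have "\<dots> = (\<Prod>i<n. x i ^ a j i * (1 - x i) ^ b j i)"
    by (rule prod.cong[OF refl]) (simp add: gg_coin j)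
  also have "\<dots> = bernstein_monomial n (a j) (b j) x" by (simp add: bernstein_monomial_def)
  finally show ?thesis using gg_sel[OF j] prob_cond_prod by simp
qed

lemma prob_set:
  assumes Js: "Js \<subseteq> {..<J}"
  shows "(\<Sum>q\<in>{q. length q = D \<and> (\<exists>j\<in>Js. cond j q)}. pp D (w x) q) =
    (\<Sum>j\<in>Js. c j * bernstein_monomial n (a j) (b j) x) / R 0"
proof -
  have fin: "finite Js" using Js finite_subset by blast
  have "{q. length q = D \<and> (\<exists>j\<in>Js. cond j q)} = {q \<in> {q. length q = D}. \<exists>j\<in>Js. cond j q}" by simp
  then have "(\<Sum>q\<in>{q. length q = D \<and> (\<exists>j\<in>Js. cond j q)}. pp D (w x) q) =
      (\<Sum>q\<in>{q. length q = D}. if \<exists>j\<in>Js. cond j q then pp D (w x) q else 0)"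
    by (simp only: sum.inter_filter[OF finite_BL])
  also have "\<dots> = (\<Sum>q\<in>{q. length q = D}. \<Sum>j\<in>Js. if cond j q then pp D (w x) q else 0)"
  proof (rule sum.cong[OF refl])
    fix q
    have "(if \<exists>j\<in>Js. cond j q then pp D (w x) q else 0) = (if \<exists>j\<in>Js. cond j q then 1 else 0) * pp D (w x) q"
      by simp
    also have "\<dots> = (\<Sum>j\<in>Js. if cond j q then 1 else 0) * pp D (w x) q"
      by (simp only: ind_sum[OF Js])
    also have "\<dots> = (\<Sum>j\<in>Js. (if cond j q then 1 else 0) * pp D (w x) q)"
      by (rule sum_distrib_right)
    also have "\<dots> = (\<Sum>j\<in>Js. if cond j q then pp D (w x) q else 0)"
      by (rule sum.cong) simp_all
    finally show "(if \<exists>j\<in>Js. cond j q then pp D (w x) q else 0) = (\<Sum>j\<in>Js. if cond j q then pp D (w x) q else 0)" .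
  qed
  also have "\<dots> = (\<Sum>j\<in>Js. \<Sum>q\<in>{q. length q = D}. if cond j q then pp D (w x) q else 0)"
    by (rule sum.swap)
  also have "\<dots> = (\<Sum>j\<in>Js. c j * bernstein_monomial n (a j) (b j) x / R 0)"
    by (rule sum.cong[OF refl]) (use Js in \<open>auto intro: prob_cond\<close>)
  finally show ?thesis by (simp add: sum_divide_distrib)
qed

lemma wf:
  assumes labV: "\<And>j. j < J \<Longrightarrow> lab j \<in> V"
  shows "well_formed_factory n V (ptree D lev out)"
  unfolding well_formed_factory_def
proof
  fix p
  show "case ptree D lev out p of Coin i \<Rightarrow> i < n | Const r \<Rightarrow> 0 < r \<and> r < 1 | Leaf v \<Rightarrow> v \<in> V"
  proof (cases "is_leaf (ptree D lev out p)")
    case True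
    from ptree_is_leaf[OF D_pos lev_ok(1) True] obtain m v where
      mv: "p \<in> good D out (\<lambda>q. out q = Some v) m" "ptree D lev out p = Leaf v" by blast
    then have "out (blk D p m) = Some v" by (simp add: good_def)
    then obtain j where "j < J" "lab j = v" using out_in_V by blast
    then have "v \<in> V" using labV by blast
    then show ?thesis by (simp add: mv(2))
  next
    case False
    have "ptree D lev out p = lev (length p mod D) \<or> ptree D lev out p = Const (1/2) \<or> is_leaf (ptree D lev out p)"
      unfolding ptree_def by (cases "\<forall>j < length p div D. out (blk D p j) = None"; cases "length p mod D = 0 \<and> (\<forall>j < length p div D - 1. out (blk D p j) = None)") simp_all
    moreover have "length p mod D < D" using D_pos by simp
    ultimately show ?thesis using False lev_ok(2)[of "length p mod D"] by (elim disjE; cases "lev (length p mod D)") simp_all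
  qed
qed

lemma w_eq: "w x = (\<lambda>k. edge_prob x (lev k))"
  by (intro ext) (simp add: w_def)

lemma w_nn:
  assumes x: "\<forall>i<n. 0 \<le> x i \<and> x i \<le> 1" and k: "k < D"
  shows "w x k bb \<ge> 0"
  using lev_ok(2)[OF k] x by (cases "lev k") (auto simp: w_def)

lemma probs:
  assumes x: "\<forall>i<n. 0 \<le> x i \<and> x i \<le> 1"
    and s: "0 < (\<Sum>j<J. c j * bernstein_monomial n (a j) (b j) x)"
  shows "(path_prob x (ptree D lev out) has_sum
           ((\<Sum>j\<in>{j. j < J \<and> lab j = v}. c j * bernstein_monomial n (a j) (b j) x) /
            (\<Sum>j<J. c j * bernstein_monomial n (a j) (b j) x))) (leaves_with (ptree D lev out) v)"
    and "(path_prob x (ptree D lev out) has_sum 1) (reached_leaves (ptree D lev out))"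
proof -
  let ?s = "\<Sum>j<J. c j * bernstein_monomial n (a j) (b j) x"
  let ?N = "{q. length q = D \<and> out q = None}"
  let ?NN = "{q. length q = D \<and> (\<exists>j\<in>{..<J}. cond j q)}"
  have R0: "R 0 > 0" by (rule R_pos[OF J_pos])
  have NN: "(\<Sum>q\<in>?NN. pp D (w x) q) = ?s / R 0" by (rule prob_set) simp
  have split: "{q. length q = D} = ?N \<union> ?NN" "?N \<inter> ?NN = {}"
    by (auto simp: out_None)
  have finN: "finite ?N" "finite ?NN" by (rule finite_subset[OF _ finite_BL], blast)+
  have "(\<Sum>q\<in>?N. pp D (w x) q) + (\<Sum>q\<in>?NN. pp D (w x) q) = (\<Sum>q\<in>?N \<union> ?NN. pp D (w x) q)"
    by (rule sum.union_disjoint[symmetric, OF finN split(2)])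
  also have "\<dots> = 1" unfolding split(1)[symmetric] by (rule total)
  finally have "(\<Sum>q\<in>?N. pp D (w x) q) + (\<Sum>q\<in>?NN. pp D (w x) q) = 1" .
  then have rho: "(\<Sum>q\<in>?N. pp D (w x) q) = 1 - ?s / R 0" using NN by simp
  have rho1: "(\<Sum>q\<in>?N. pp D (w x) q) < 1" using rho s R0 by simp
  have one_m: "1 - (\<Sum>q\<in>?N. pp D (w x) q) = ?s / R 0" using rho by simp
  have nn: "\<And>k bb. k < D \<Longrightarrow> w x k bb \<ge> 0" using w_nn[OF x] by blast
  have pcong: "((path_prob x (ptree D lev out)) has_sum r) (\<Union>m. good D out G m) \<longleftrightarrow>
      (pp D (w x) has_sum r) (\<Union>m. good D out G m)" for r G
    by (rule has_sum_cong) (auto simp: path_prob_good[OF D_pos] w_eq)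
  show "(path_prob x (ptree D lev out) has_sum
           ((\<Sum>j\<in>{j. j < J \<and> lab j = v}. c j * bernstein_monomial n (a j) (b j) x) / ?s))
         (leaves_with (ptree D lev out) v)"
  proof -
    have eqs: "{q. length q = D \<and> out q = Some v} = {q. length q = D \<and> (\<exists>j\<in>{j. j < J \<and> lab j = v}. cond j q)}"
      using out_Some by blast
    have mu: "(\<Sum>q\<in>{q. length q = D \<and> out q = Some v}. pp D (w x) q) =
        (\<Sum>j\<in>{j. j < J \<and> lab j = v}. c j * bernstein_monomial n (a j) (b j) x) / R 0"
      unfolding eqs by (rule prob_set) auto
    have "(pp D (w x) has_sum ((\<Sum>q\<in>{q. length q = D \<and> out q = Some v}. pp D (w x) q) /
            (1 - (\<Sum>q\<in>?N. pp D (w x) q)))) (\<Union>m. good D out (\<lambda>q. out q = Some v) m)"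
      by (rule has_sum_good[OF D_pos nn rho1])
    also have "(\<Sum>q\<in>{q. length q = D \<and> out q = Some v}. pp D (w x) q) /
            (1 - (\<Sum>q\<in>?N. pp D (w x) q)) =
         (\<Sum>j\<in>{j. j < J \<and> lab j = v}. c j * bernstein_monomial n (a j) (b j) x) / ?s"
      unfolding mu one_m using R0 by simp
    finally have h: "(pp D (w x) has_sum (\<Sum>j\<in>{j. j < J \<and> lab j = v}. c j * bernstein_monomial n (a j) (b j) x) / ?s)
      (\<Union>m. good D out (\<lambda>q. out q = Some v) m)" .
    have L: "leaves_with (ptree D lev out) v = (\<Union>m. good D out (\<lambda>q. out q = Some v) m)"
      by (rule leaves_with_ptree[OF D_pos lev_ok(1)])
    show ?thesis unfolding L using pcong h by blast
  qed
  show "(path_prob x (ptree D lev out) has_sum 1) (reached_leaves (ptree D lev out))"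
  proof -
    have eqs: "{q. length q = D \<and> out q \<noteq> None} = ?NN"
      by (auto simp: out_None)
    have "(pp D (w x) has_sum ((\<Sum>q\<in>{q. length q = D \<and> out q \<noteq> None}. pp D (w x) q) /
            (1 - (\<Sum>q\<in>?N. pp D (w x) q)))) (\<Union>m. good D out (\<lambda>q. out q \<noteq> None) m)"
      by (rule has_sum_good[OF D_pos nn rho1])
    also have "(\<Sum>q\<in>{q. length q = D \<and> out q \<noteq> None}. pp D (w x) q) /
            (1 - (\<Sum>q\<in>?N. pp D (w x) q)) = 1"
      unfolding eqs NN one_m using R0 s by simp
    finally have h: "(pp D (w x) has_sum 1) (\<Union>m. good D out (\<lambda>q. out q \<noteq> None) m)" .
    have L: "reached_leaves (ptree D lev out) = (\<Union>m. good D out (\<lambda>q. out q \<noteq> None) m)"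
      by (rule reached_leaves_ptree[OF D_pos lev_ok(1)])
    show ?thesis unfolding L using pcong h by blast
  qed
qed

end


lemma sum_list_map_concat:
  "sum_list (map f (concat L)) = sum_list (map (\<lambda>l. sum_list (map f l)) L)"
  by (induction L) simp_all

theorem corollary2p6:
  fixes n :: nat and V :: "'v set" and P :: "'v \<Rightarrow> (nat \<Rightarrow> real) \<Rightarrow> real"
    and S :: "(nat \<Rightarrow> real) set"
  assumes "finite V"
    and "\<And>v. v \<in> V \<Longrightarrow> is_bernstein_poly n (P v)"
    and "S \<subseteq> {x. \<forall>i<n. 0 \<le> x i \<and> x i \<le> 1}"
    and "\<And>x. x \<in> S \<Longrightarrow> (\<Sum>v\<in>V. P v x) > 0"
  shows "\<exists>T :: 'v factory. well_formed_factory n V T \<and> terminates_as_on T S \<and>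
           (\<forall>x\<in>S. \<forall>v\<in>V. outputs_with_prob T x v (P v x / (\<Sum>v'\<in>V. P v' x)))"
proof -
  let ?M = "bernstein_monomial n"
  have "\<forall>v\<in>V. \<exists>cs. (\<forall>(c, a, b) \<in> set cs. c > 0) \<and> (\<forall>x. P v x = (\<Sum>(c, a, b) \<leftarrow> cs. c * ?M a b x))"
    using assms(2) by (simp add: is_bernstein_poly_def)
  then obtain cs where cs: "\<And>v. v \<in> V \<Longrightarrow> (\<forall>(c, a, b) \<in> set (cs v). c > 0) \<and>
      (\<forall>x. P v x = (\<Sum>(c, a, b) \<leftarrow> cs v. c * ?M a b x))"
    by metis
  obtain vs where vs: "set vs = V" "distinct vs" using finite_distinct_list[OF assms(1)] by blast
  define G where "G = concat (map (\<lambda>v. map (\<lambda>(c, a, b). (c, a, b, v)) (cs v)) vs)"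
  define F where "F v x e = (if snd (snd (snd e)) = v then fst e * ?M (fst (snd e)) (fst (snd (snd e))) x else 0)"
    for v x and e :: "real \<times> (nat \<Rightarrow> nat) \<times> (nat \<Rightarrow> nat) \<times> 'v"
  have Gset: "fst e > 0 \<and> snd (snd (snd e)) \<in> V" if "e \<in> set G" for e
  proof -
    have "\<exists>v\<in>set vs. e \<in> set (map (\<lambda>(c, a, b). (c, a, b, v)) (cs v))"
      using that unfolding G_def by auto
    then obtain v where v: "v \<in> V" "e \<in> set (map (\<lambda>(c, a, b). (c, a, b, v)) (cs v))"
      using vs by blast
    then obtain c a b where e: "e = (c, a, b, v)" "(c, a, b) \<in> set (cs v)" by auto
    then show ?thesis using cs[OF v(1)] v(1) by auto
  qed
  have Psum: "P v x = sum_list (map (F v x) G)" if v: "v \<in> V" for v x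
  proof -
    have "sum_list (map (F v x) G) =
        sum_list (map (\<lambda>v'. sum_list (map (F v x) (map (\<lambda>(c, a, b). (c, a, b, v')) (cs v')))) vs)"
      unfolding G_def sum_list_map_concat by (simp add: o_def)
    also have "\<dots> = sum_list (map (\<lambda>v'. if v' = v then P v x else 0) vs)"
    proof (rule arg_cong[where f = sum_list], rule map_cong[OF refl])
      fix v' assume "v' \<in> set vs"
      show "sum_list (map (F v x) (map (\<lambda>(c, a, b). (c, a, b, v')) (cs v'))) = (if v' = v then P v x else 0)"
      proof (cases "v' = v")
        case True
        have eq: "map (F v x) (map (\<lambda>(c, a, b). (c, a, b, v')) (cs v')) = map (\<lambda>(c, a, b). c * ?M a b x) (cs v)"
          using True by (auto simp: F_def)
        have "sum_list (map (F v x) (map (\<lambda>(c, a, b). (c, a, b, v')) (cs v'))) = (\<Sum>(c, a, b) \<leftarrow> cs v. c * ?M a b x)"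
          by (simp only: eq)
        also have "\<dots> = P v x" using cs[OF v] by simp
        finally show ?thesis using True by simp
      next
        case False
        have eq: "map (F v x) (map (\<lambda>(c, a, b). (c, a, b, v')) (cs v')) = map (\<lambda>_. 0) (cs v')"
          using False by (auto simp: F_def)
        show ?thesis using False by (simp only: eq if_False) simp
      qed
    qed
    also have "\<dots> = (\<Sum>v'\<in>V. if v' = v then P v x else 0)"
      using vs by (simp add: sum_list_distinct_conv_sum_set)
    also have "\<dots> = P v x" using v assms(1) by simp
    finally show ?thesis by simp
  qed
  show ?thesis
  proof (cases "G = []")
    case True
    have "S = {}"
    proof (rule ccontr)
      assume "S \<noteq> {}"
      then obtain x where x: "x \<in> S" by blast
      have "(\<Sum>v\<in>V. P v x) = 0" using Psum True by simp
      with assms(4)[OF x] show False by simp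
    qed
    then show ?thesis
      by (intro exI[of _ "\<lambda>_. Const (1/2)"]) (simp add: well_formed_factory_def terminates_as_on_def)
  next
    case False
    interpret r: round n G
      using False Gset by unfold_locales auto
    have labV: "r.lab j \<in> V" if "j < r.J" for j
      using Gset[OF nth_mem[of j G]] that by (simp add: r.lab_def r.J_def)
    have Pj: "P v x = (\<Sum>j<r.J. if r.lab j = v then r.c j * ?M (r.a j) (r.b j) x else 0)" if v: "v \<in> V" for v x
      unfolding Psum[OF v] sum_list_sum_nth r.J_def atLeast0LessThan length_map
      by (rule sum.cong[OF refl]) (simp add: F_def r.lab_def r.c_def r.a_def r.b_def)
    have Pv: "P v x = (\<Sum>j\<in>{j. j < r.J \<and> r.lab j = v}. r.c j * ?M (r.a j) (r.b j) x)" if v: "v \<in> V" for v x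
    proof -
      have "{j. j < r.J \<and> r.lab j = v} = {j \<in> {..<r.J}. r.lab j = v}" by auto
      then show ?thesis unfolding Pj[OF v] by (simp only: sum.inter_filter[OF finite_lessThan])
    qed
    have PV: "(\<Sum>v\<in>V. P v x) = (\<Sum>j<r.J. r.c j * ?M (r.a j) (r.b j) x)" for x
    proof -
      have "(\<Sum>v\<in>V. P v x) = (\<Sum>v\<in>V. \<Sum>j<r.J. if r.lab j = v then r.c j * ?M (r.a j) (r.b j) x else 0)"
        by (rule sum.cong[OF refl]) (rule Pj)
      also have "\<dots> = (\<Sum>j<r.J. \<Sum>v\<in>V. if r.lab j = v then r.c j * ?M (r.a j) (r.b j) x else 0)"
        by (rule sum.swap)
      also have "\<dots> = (\<Sum>j<r.J. r.c j * ?M (r.a j) (r.b j) x)"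
        by (rule sum.cong[OF refl]) (use labV assms(1) in simp)
      finally show ?thesis .
    qed
    show ?thesis
    proof (intro exI[of _ "ptree r.D r.lev r.out"] conjI ballI)
      show "well_formed_factory n V (ptree r.D r.lev r.out)"
        by (rule r.wf) (rule labV)
    next
      show "terminates_as_on (ptree r.D r.lev r.out) S"
        unfolding terminates_as_on_def
      proof
        fix x assume x: "x \<in> S"
        show "(path_prob x (ptree r.D r.lev r.out) has_sum 1) (reached_leaves (ptree r.D r.lev r.out))"
          using r.probs(2)[of x] assms(3) x assms(4)[OF x] unfolding PV by blast
      qed
    next
      fix x v assume x: "x \<in> S" and v: "v \<in> V"
      show "outputs_with_prob (ptree r.D r.lev r.out) x v (P v x / (\<Sum>v'\<in>V. P v' x))"
        unfolding outputs_with_prob_def Pv[OF v] PV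
        using r.probs(1)[of x v] assms(3) x assms(4)[OF x] unfolding PV by blast
    qed
  qed
qed

end
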